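(* Let $G$ be a finite group and let $\alpha_1,\alpha_2\colon G\to\mathbf{GL}_n(k)$ be injective homomorphisms. Then there exists $\varphi\in\mathrm{Cr}_{2n}$ such that $\alpha_1=\mathrm{Int}(\varphi)\circ\alpha_2$, where $\mathrm{Int}(\varphi)$ denotes conjugation by $\varphi$.
   Context: $k$ is an algebraically closed field of characteristic zero. $\mathrm{Cr}_m$ is the Cremona group of rank $m$, i.e., the group of birational self-maps of $\mathbf{A}^m$. $\mathbf{GL}_n(k)$ is identified with the subgroup of $\mathrm{Cr}_n$ of linear transformations of $\mathbf{A}^n$, and $\mathrm{Cr}_n$ is identified with a subgroup of $\mathrm{Cr}_{2n}$ via the standard embedding (acting on the first $n$ coordinates of $\mathbf{A}^{2n}=\mathbf{A}^n\times\mathbf{A}^n$ and trivially on the last $n$). *)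

theory Defs
  imports "HOL-Algebra.Group" "HOL-Computational_Algebra.Polynomial" "Jordan_Normal_Form.Matrix"
begin

definition alg_closed_field :: "'k::field itself \<Rightarrow> bool" where
  "alg_closed_field _ \<longleftrightarrow> (\<forall>p :: 'k poly. 0 < degree p \<longrightarrow> (\<exists>x. poly p x = 0))"

text \<open>Points of the affine space A^m are functions nat => k; only coordinates 0..m-1 matter.
  Polynomial functions in the m coordinates x_0,...,x_(m-1).\<close>
inductive_set poly_funs :: "nat \<Rightarrow> ((nat \<Rightarrow> 'k::field) \<Rightarrow> 'k) set" for m :: nat where
  pf_const: "(\<lambda>x. c) \<in> poly_funs m"
| pf_var: "i < m \<Longrightarrow> (\<lambda>x. x i) \<in> poly_funs m"
| pf_add: "f \<in> poly_funs m \<Longrightarrow> g \<in> poly_funs m \<Longrightarrow> (\<lambda>x. f x + g x) \<in> poly_funs m"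
| pf_mult: "f \<in> poly_funs m \<Longrightarrow> g \<in> poly_funs m \<Longrightarrow> (\<lambda>x. f x * g x) \<in> poly_funs m"

text \<open>A set U contains a nonempty Zariski open subset of A^m (a basic open set D(h), h a nonzero polynomial).\<close>
definition contains_nonempty_open :: "nat \<Rightarrow> ((nat \<Rightarrow> 'k::field) set) \<Rightarrow> bool" where
  "contains_nonempty_open m U \<longleftrightarrow>
     (\<exists>h \<in> poly_funs m. (\<exists>x. h x \<noteq> 0) \<and> {x. h x \<noteq> 0} \<subseteq> U)"

text \<open>A rational map A^m -> A^m given by coordinate fractions p_i / q_i (i < m), q_i nonzero.\<close>
type_synonym 'k ratmap = "(nat \<Rightarrow> (nat \<Rightarrow> 'k) \<Rightarrow> 'k) \<times> (nat \<Rightarrow> (nat \<Rightarrow> 'k) \<Rightarrow> 'k)"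

definition is_ratmap :: "nat \<Rightarrow> 'k::field ratmap \<Rightarrow> bool" where
  "is_ratmap m F \<longleftrightarrow> (\<forall>i<m. fst F i \<in> poly_funs m \<and> snd F i \<in> poly_funs m \<and> (\<exists>x. snd F i x \<noteq> 0))"

definition rm_defined :: "nat \<Rightarrow> 'k::field ratmap \<Rightarrow> (nat \<Rightarrow> 'k) \<Rightarrow> bool" where
  "rm_defined m F x \<longleftrightarrow> (\<forall>i<m. snd F i x \<noteq> 0)"

definition rm_eval :: "'k::field ratmap \<Rightarrow> (nat \<Rightarrow> 'k) \<Rightarrow> (nat \<Rightarrow> 'k)" where
  "rm_eval F x = (\<lambda>i. fst F i x / snd F i x)"

definition birational_pair :: "nat \<Rightarrow> 'k::field ratmap \<Rightarrow> 'k ratmap \<Rightarrow> bool" where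
  "birational_pair m \<phi> \<psi> \<longleftrightarrow> is_ratmap m \<phi> \<and> is_ratmap m \<psi> \<and>
     contains_nonempty_open m {x. rm_defined m \<phi> x \<and> rm_defined m \<psi> (rm_eval \<phi> x) \<and>
                                  (\<forall>i<m. rm_eval \<psi> (rm_eval \<phi> x) i = x i)} \<and>
     contains_nonempty_open m {x. rm_defined m \<psi> x \<and> rm_defined m \<phi> (rm_eval \<psi> x) \<and>
                                  (\<forall>i<m. rm_eval \<phi> (rm_eval \<psi> x) i = x i)}"

definition cremona :: "nat \<Rightarrow> 'k::field ratmap \<Rightarrow> bool" where
  "cremona m \<phi> \<longleftrightarrow> (\<exists>\<psi>. birational_pair m \<phi> \<psi>)"

definition GL :: "nat \<Rightarrow> 'k::field mat monoid" where
  "GL n = \<lparr>carrier = {A \<in> carrier_mat n n. invertible_mat A}, mult = (*), one = 1\<^sub>m n\<rparr>"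

text \<open>Action of A in GL_n on A^(2n) = A^n x A^n: linear on the first n coordinates, trivial on the last n
  (the standard embedding GL_n(k) in Cr_n in Cr_2n).\<close>
definition lin_act2 :: "nat \<Rightarrow> 'k::field mat \<Rightarrow> (nat \<Rightarrow> 'k) \<Rightarrow> (nat \<Rightarrow> 'k)" where
  "lin_act2 n A y = (\<lambda>i. if i < n then (\<Sum>j<n. A $$ (i, j) * y j) else y i)"

end

theory Submission
  imports Defs "Jordan_Normal_Form.Determinant"
begin


lemma pf_sum: "finite A \<Longrightarrow> (\<And>a. a \<in> A \<Longrightarrow> f a \<in> poly_funs m) \<Longrightarrow> (\<lambda>x. \<Sum>a\<in>A. f a x) \<in> poly_funs m"
proof (induction A rule: finite_induct)
  case empty then show ?case using pf_const[of 0 m] by simp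
next
  case (insert a A) then show ?case using pf_add[of "f a" m "\<lambda>x. \<Sum>a\<in>A. f a x"] by simp
qed

lemma pf_prod: "finite A \<Longrightarrow> (\<And>a. a \<in> A \<Longrightarrow> f a \<in> poly_funs m) \<Longrightarrow> (\<lambda>x. \<Prod>a\<in>A. f a x) \<in> poly_funs m"
proof (induction A rule: finite_induct)
  case empty then show ?case using pf_const[of 1 m] by simp
next
  case (insert a A) then show ?case using pf_mult[of "f a" m "\<lambda>x. \<Prod>a\<in>A. f a x"] by simp
qed

lemma pf_cmult: "f \<in> poly_funs m \<Longrightarrow> (\<lambda>x. c * f x) \<in> poly_funs m"
  using pf_mult[OF pf_const] by blast

lemma pf_diff: "f \<in> poly_funs m \<Longrightarrow> g \<in> poly_funs m \<Longrightarrow> (\<lambda>x. f x - g x) \<in> poly_funs m"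
  using pf_add[of f m "\<lambda>x. (-1) * g x"] pf_cmult[of g m "-1"] by simp

lemma pf_subst: "P \<in> poly_funs n \<Longrightarrow> (\<And>j. j < n \<Longrightarrow> Q j \<in> poly_funs m) \<Longrightarrow> (\<lambda>x. P (\<lambda>j. Q j x)) \<in> poly_funs m"
proof (induction P rule: poly_funs.induct)
  case (pf_const c) then show ?case using poly_funs.pf_const by auto
next
  case (pf_var i) then show ?case by simp
next
  case (pf_add f g) then show ?case using poly_funs.pf_add by blast
next
  case (pf_mult f g) then show ?case using poly_funs.pf_mult by blast
qed

lemma pf_dep: "P \<in> poly_funs n \<Longrightarrow> (\<And>j. j < n \<Longrightarrow> x j = y j) \<Longrightarrow> P x = P y"
  by (induction P rule: poly_funs.induct) auto

lemma pf_mono: "P \<in> poly_funs n \<Longrightarrow> n \<le> m \<Longrightarrow> P \<in> poly_funs m"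
  by (induction P rule: poly_funs.induct) (auto intro: poly_funs.intros)

definition pmat :: "nat \<Rightarrow> nat \<Rightarrow> ((nat \<Rightarrow> 'k::field) \<Rightarrow> 'k mat) \<Rightarrow> bool" where
  "pmat m k M \<longleftrightarrow> (\<forall>x. M x \<in> carrier_mat k k) \<and> (\<forall>i<k. \<forall>j<k. (\<lambda>x. M x $$ (i,j)) \<in> poly_funs m)"

lemma pf_det: assumes "pmat m k M" shows "(\<lambda>x. det (M x)) \<in> poly_funs m"
proof -
  have C: "\<And>x. M x \<in> carrier_mat k k" using assms unfolding pmat_def by auto
  have "(\<lambda>x. \<Sum> p \<in> {p. p permutes {0 ..< k}}. signof p * (\<Prod> i = 0 ..< k. M x $$ (i, p i))) \<in> poly_funs m"
  proof (rule pf_sum)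
    show "finite {p. p permutes {0 ..< k}}" by (simp add: finite_permutations)
    fix p assume p: "p \<in> {p. p permutes {0 ..< k}}"
    show "(\<lambda>x. signof p * (\<Prod> i = 0 ..< k. M x $$ (i, p i))) \<in> poly_funs m"
    proof (rule pf_cmult, rule pf_prod)
      fix i assume i: "i \<in> {0..<k}"
      then have "p i < k" using p permutes_in_image by fastforce
      then show "(\<lambda>x. M x $$ (i, p i)) \<in> poly_funs m" using assms i unfolding pmat_def by auto
    qed simp
  qed
  then show ?thesis using det_def'[OF C] by simp
qed

lemma pmat_adj: assumes "pmat m k M" shows "pmat m k (\<lambda>x. adj_mat (M x))"
proof -
  have C: "\<And>x. M x \<in> carrier_mat k k" using assms unfolding pmat_def by auto
  have D: "pmat m (k-1) (\<lambda>x. mat_delete (M x) j i)" if "i < k" "j < k" for i j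
    unfolding pmat_def
  proof (intro conjI allI impI)
    fix x show "mat_delete (M x) j i \<in> carrier_mat (k - 1) (k - 1)" using mat_delete_carrier[OF C] .
  next
    fix a b assume ab: "a < k - 1" "b < k - 1"
    define a' where "a' = (if a < j then a else Suc a)"
    define b' where "b' = (if b < i then b else Suc b)"
    have "a' < k" "b' < k" using ab unfolding a'_def b'_def by auto
    then have P: "(\<lambda>x. M x $$ (a', b')) \<in> poly_funs m" using assms unfolding pmat_def by auto
    have "\<And>x. mat_delete (M x) j i $$ (a, b) = M x $$ (a', b')"
    proof -
      fix x have "dim_row (M x) = k" "dim_col (M x) = k" using C[of x] by auto
      then show "mat_delete (M x) j i $$ (a, b) = M x $$ (a', b')"
        using ab unfolding mat_delete_def a'_def b'_def by auto
    qed
    then show "(\<lambda>x. mat_delete (M x) j i $$ (a, b)) \<in> poly_funs m" using P by simp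
  qed
  show ?thesis unfolding pmat_def
  proof (intro conjI allI impI)
    fix x show "adj_mat (M x) \<in> carrier_mat k k" using adj_mat(1)[OF C] .
  next
    fix i j assume ij: "i < k" "j < k"
    have "(\<lambda>x. (-1)^(j+i) * det (mat_delete (M x) j i)) \<in> poly_funs m"
      by (rule pf_cmult, rule pf_det, rule D[OF ij])
    moreover have "\<And>x. adj_mat (M x) $$ (i, j) = (-1)^(j+i) * det (mat_delete (M x) j i)"
    proof -
      fix x have "dim_row (M x) = k" "dim_col (M x) = k" using C[of x] by auto
      then show "adj_mat (M x) $$ (i, j) = (-1)^(j+i) * det (mat_delete (M x) j i)"
        using ij by (simp add: adj_mat_def cofactor_def)
    qed
    ultimately show "(\<lambda>x. adj_mat (M x) $$ (i, j)) \<in> poly_funs m" by simp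
  qed
qed



lemma inv_mat_ex: assumes "invertible_mat (A::'a::comm_ring_1 mat)" "A \<in> carrier_mat n n"
  shows "\<exists>B\<in>carrier_mat n n. A * B = 1\<^sub>m n \<and> B * A = 1\<^sub>m n"
proof -
  obtain B where B: "A * B = 1\<^sub>m (dim_row A)" "B * A = 1\<^sub>m (dim_row B)"
    using assms unfolding invertible_mat_def inverts_mat_def by blast
  have "dim_col B = n" using B(1) assms(2) by (metis carrier_matD(1) index_mult_mat(3) index_one_mat(3))
  moreover have "dim_row B = n" using B(2) assms(2)
    by (metis carrier_matD(2) index_mult_mat(2) index_mult_mat(3) index_one_mat(2) index_one_mat(3))
  ultimately show ?thesis using B assms(2) by auto
qed

lemma det_inv_nz: assumes "invertible_mat (A::'a::field mat)" "A \<in> carrier_mat n n"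
  shows "det A \<noteq> 0"
proof -
  obtain B where B: "B \<in> carrier_mat n n" "A * B = 1\<^sub>m n" using inv_mat_ex[OF assms] by blast
  have "det A * det B = 1" using det_mult[OF assms(2) B(1)] B(2) by simp
  then show ?thesis by auto
qed

locale GLhom =
  fixes G :: "('g, 'b) monoid_scheme" and n :: nat and \<beta> :: "'g \<Rightarrow> 'k::field mat"
  assumes grp: "group G" and hom: "\<beta> \<in> hom G (GL n)"
begin

lemma car: "g \<in> carrier G \<Longrightarrow> \<beta> g \<in> carrier_mat n n"
  using hom unfolding hom_def GL_def by auto

lemma invt: "g \<in> carrier G \<Longrightarrow> invertible_mat (\<beta> g)"
  using hom unfolding hom_def GL_def by auto

lemma mult: "g \<in> carrier G \<Longrightarrow> h \<in> carrier G \<Longrightarrow> \<beta> (g \<otimes>\<^bsub>G\<^esub> h) = \<beta> g * \<beta> h"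
  using hom unfolding hom_def GL_def by auto

lemma detnz: "g \<in> carrier G \<Longrightarrow> det (\<beta> g) \<noteq> 0"
  using det_inv_nz[OF invt car] .

lemma one: "\<beta> \<one>\<^bsub>G\<^esub> = 1\<^sub>m n"
proof -
  interpret group G by (rule grp)
  have o: "\<one>\<^bsub>G\<^esub> \<in> carrier G" by simp
  have e: "\<beta> \<one>\<^bsub>G\<^esub> = \<beta> \<one>\<^bsub>G\<^esub> * \<beta> \<one>\<^bsub>G\<^esub>" using mult[OF o o] by simp
  obtain B where B: "B \<in> carrier_mat n n" "B * \<beta> \<one>\<^bsub>G\<^esub> = 1\<^sub>m n"
    using inv_mat_ex[OF invt[OF o] car[OF o]] by blast
  have "\<beta> \<one>\<^bsub>G\<^esub> = 1\<^sub>m n * \<beta> \<one>\<^bsub>G\<^esub>" using car[OF o] by simp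
  also have "\<dots> = (B * \<beta> \<one>\<^bsub>G\<^esub>) * \<beta> \<one>\<^bsub>G\<^esub>" using B by simp
  also have "\<dots> = B * (\<beta> \<one>\<^bsub>G\<^esub> * \<beta> \<one>\<^bsub>G\<^esub>)" using B car[OF o] by (metis assoc_mult_mat)
  also have "\<dots> = 1\<^sub>m n" using e B by simp
  finally show ?thesis .
qed

end

lemma exists_generic_point:
  fixes S :: "'k::field_char_0 mat set"
  assumes "finite S" "\<And>A. A \<in> S \<Longrightarrow> A \<in> carrier_mat n n \<and> A \<noteq> 1\<^sub>m n"
  shows "\<exists>x0\<in>carrier_vec n. \<forall>A\<in>S. A *\<^sub>v x0 \<noteq> x0"
proof -
  have ex: "\<exists>r c. r < n \<and> c < n \<and> A $$ (r,c) \<noteq> 1\<^sub>m n $$ (r,c)" if "A \<in> S" for A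
  proof (rule ccontr)
    assume "\<not> ?thesis"
    then have "A = 1\<^sub>m n" using assms(2)[OF that] by (intro eq_matI) auto
    then show False using assms(2)[OF that] by simp
  qed
  define r where "r A = (SOME r. \<exists>c. r < n \<and> c < n \<and> A $$ (r,c) \<noteq> 1\<^sub>m n $$ (r,c))" for A :: "'k mat"
  define c where "c A = (SOME c. r A < n \<and> c < n \<and> A $$ (r A,c) \<noteq> 1\<^sub>m n $$ (r A,c))" for A :: "'k mat"
  have rc: "r A < n \<and> c A < n \<and> A $$ (r A, c A) \<noteq> 1\<^sub>m n $$ (r A, c A)" if "A \<in> S" for A
  proof -
    have "\<exists>c. r A < n \<and> c < n \<and> A $$ (r A,c) \<noteq> 1\<^sub>m n $$ (r A,c)"
      unfolding r_def using someI_ex[OF ex[OF that]] .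
    then show ?thesis unfolding c_def by (rule someI_ex)
  qed
  define q where "q A = (\<Sum>j<n. monom (A $$ (r A, j) - 1\<^sub>m n $$ (r A, j)) j)" for A :: "'k mat"
  have qnz: "q A \<noteq> 0" if "A \<in> S" for A
  proof -
    have "coeff (q A) (c A) = A $$ (r A, c A) - 1\<^sub>m n $$ (r A, c A)"
      unfolding q_def coeff_sum coeff_monom using rc[OF that] by (simp add: sum.delta)
    then show ?thesis using rc[OF that] by auto
  qed
  define Q where "Q = (\<Prod>A\<in>S. q A)"
  have "Q \<noteq> 0" unfolding Q_def using qnz assms(1) by auto
  then have "finite {t. poly Q t = 0}" by (rule poly_roots_finite)
  moreover have "infinite (UNIV :: 'k set)" by (rule infinite_UNIV_char_0)
  ultimately obtain t where t: "poly Q t \<noteq> 0"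
    by (metis (mono_tags, lifting) ex_new_if_finite mem_Collect_eq)
  define x0 where "x0 = vec n (\<lambda>j. t ^ j)"
  have "A *\<^sub>v x0 \<noteq> x0" if "A \<in> S" for A
  proof
    assume eq: "A *\<^sub>v x0 = x0"
    have rn: "r A < n" using rc[OF that] by simp
    have Ac: "A \<in> carrier_mat n n" using assms(2)[OF that] by simp
    have "poly (q A) t = (\<Sum>j<n. A $$ (r A, j) * t ^ j) - (\<Sum>j<n. 1\<^sub>m n $$ (r A, j) * t ^ j)"
      unfolding q_def poly_sum poly_monom by (simp add: algebra_simps sum_subtractf)
    also have "(\<Sum>j<n. 1\<^sub>m n $$ (r A, j) * t ^ j) = t ^ r A"
    proof -
      have "(\<Sum>j<n. 1\<^sub>m n $$ (r A, j) * t ^ j) = (\<Sum>j<n. if r A = j then t ^ j else 0)"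
        using rn by (intro sum.cong) auto
      then show ?thesis using rn by simp
    qed
    also have "(\<Sum>j<n. A $$ (r A, j) * t ^ j) = (A *\<^sub>v x0) $ r A"
      using Ac rn unfolding x0_def mult_mat_vec_def scalar_prod_def
      by (auto simp: atLeast0LessThan intro: sum.cong)
    also have "\<dots> = t ^ r A" using eq rn unfolding x0_def by simp
    finally have "poly (q A) t = 0" by simp
    then have "poly Q t = 0" unfolding Q_def poly_prod using that assms(1)
      by (metis prod_zero_iff)
    then show False using t by simp
  qed
  moreover have "x0 \<in> carrier_vec n" unfolding x0_def by simp
  ultimately show ?thesis by blast
qed



lemma mvec_entry: "A \<in> carrier_mat n n \<Longrightarrow> r < n \<Longrightarrow> (A *\<^sub>v vec n p) $ r = (\<Sum>j<n. A $$ (r,j) * p j)"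
  unfolding mult_mat_vec_def scalar_prod_def by (auto simp: atLeast0LessThan intro: sum.cong)

lemma pf_lin: "A \<in> carrier_mat n n \<Longrightarrow> r < n \<Longrightarrow> (\<lambda>p. (A *\<^sub>v vec n p) $ r) \<in> poly_funs n"
  unfolding mvec_entry by (intro pf_sum pf_cmult pf_var) auto

lemma exists_F:
  fixes \<beta> \<gamma> :: "'g \<Rightarrow> 'k::field_char_0 mat" and G :: "('g,'b) monoid_scheme" (structure)
  assumes grp: "group G" and fin: "finite (carrier G)" and hb: "\<beta> \<in> hom G (GL n)"
    and hc: "\<gamma> \<in> hom G (GL n)" and ic: "inj_on \<gamma> (carrier G)"
  shows "\<exists>F x0. x0 \<in> carrier_vec n \<and> (\<forall>v. F v \<in> carrier_mat n n) \<and>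
     (\<forall>i<n. \<forall>j<n. (\<lambda>p. F (vec n p) $$ (i,j)) \<in> poly_funs n) \<and>
     (\<forall>g\<in>carrier G. \<forall>v\<in>carrier_vec n. F (\<gamma> g *\<^sub>v v) = \<beta> g * F v) \<and> F x0 = 1\<^sub>m n"
proof -
  interpret group G by (rule grp)
  interpret b: GLhom G n \<beta> using grp hb by unfold_locales
  interpret c: GLhom G n \<gamma> using grp hc by unfold_locales
  define C' where "C' = carrier G - {\<one>}"
  have finC: "finite C'" using fin unfolding C'_def by simp
  have "\<exists>x0\<in>carrier_vec n. \<forall>A\<in>\<gamma> ` C'. A *\<^sub>v x0 \<noteq> x0"
  proof (rule exists_generic_point)
    show "finite (\<gamma> ` C')" using finC by simp
    fix A assume "A \<in> \<gamma> ` C'"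
    then obtain g where g: "g \<in> carrier G" "g \<noteq> \<one>" "A = \<gamma> g" unfolding C'_def by auto
    have "\<gamma> g \<noteq> \<gamma> \<one>" using ic g by (meson inj_on_def one_closed)
    then show "A \<in> carrier_mat n n \<and> A \<noteq> 1\<^sub>m n" using g c.car c.one by auto
  qed
  then obtain x0 where x0: "x0 \<in> carrier_vec n" "\<And>g. g \<in> C' \<Longrightarrow> \<gamma> g *\<^sub>v x0 \<noteq> x0" by auto
  have exr: "\<exists>r. r < n \<and> (\<gamma> g *\<^sub>v x0) $ r \<noteq> x0 $ r" if "g \<in> C'" for g
  proof (rule ccontr)
    assume "\<not> ?thesis"
    moreover have "\<gamma> g *\<^sub>v x0 \<in> carrier_vec n" using c.car that x0(1) unfolding C'_def by (auto intro: mult_mat_vec_carrier)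
    ultimately have "\<gamma> g *\<^sub>v x0 = x0" using x0(1) by (metis carrier_vecD eq_vecI)
    then show False using x0(2)[OF that] by simp
  qed
  define r where "r g = (SOME r. r < n \<and> (\<gamma> g *\<^sub>v x0) $ r \<noteq> x0 $ r)" for g
  have r: "r g < n" "(\<gamma> g *\<^sub>v x0) $ r g \<noteq> x0 $ r g" if "g \<in> C'" for g
    using someI_ex[OF exr[OF that]] unfolding r_def by auto
  define d where "d g = x0 $ r g - (\<gamma> g *\<^sub>v x0) $ r g" for g
  have dnz: "d g \<noteq> 0" if "g \<in> C'" for g using r[OF that] unfolding d_def by simp
  define u where "u v = (\<Prod>g\<in>C'. (1 / d g) * (v $ r g - (\<gamma> g *\<^sub>v x0) $ r g))" for v
  define F where "F v = mat n n (\<lambda>(i,j). \<Sum>h\<in>carrier G. u (\<gamma> (inv h) *\<^sub>v v) * \<beta> h $$ (i,j))" for v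
  have Fc: "F v \<in> carrier_mat n n" for v unfolding F_def by simp
  have Fp: "(\<lambda>p. F (vec n p) $$ (i,j)) \<in> poly_funs n" if ij: "i < n" "j < n" for i j
  proof -
    have "(\<lambda>p. \<Sum>h\<in>carrier G. u (\<gamma> (inv h) *\<^sub>v vec n p) * \<beta> h $$ (i,j)) \<in> poly_funs n"
    proof (rule pf_sum[OF fin])
      fix h assume h: "h \<in> carrier G"
      have "(\<lambda>p. u (\<gamma> (inv h) *\<^sub>v vec n p)) \<in> poly_funs n"
        unfolding u_def
      proof (rule pf_prod[OF finC])
        fix g assume g: "g \<in> C'"
        show "(\<lambda>p. 1 / d g * ((\<gamma> (inv h) *\<^sub>v vec n p) $ r g - (\<gamma> g *\<^sub>v x0) $ r g)) \<in> poly_funs n"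
          by (intro pf_cmult pf_diff pf_lin pf_const c.car r(1)[OF g]) (use h in auto)
      qed
      then show "(\<lambda>p. u (\<gamma> (inv h) *\<^sub>v vec n p) * \<beta> h $$ (i,j)) \<in> poly_funs n"
        using pf_mult[OF _ pf_const] by blast
    qed
    then show ?thesis unfolding F_def using ij by simp
  qed
  have bij: "bij_betw (\<lambda>h. g \<otimes> h) (carrier G) (carrier G)" if g: "g \<in> carrier G" for g
  proof (rule bij_betwI[where g = "\<lambda>h. inv g \<otimes> h"])
    show "(\<lambda>h. g \<otimes> h) \<in> carrier G \<rightarrow> carrier G" using g by auto
    show "(\<lambda>h. inv g \<otimes> h) \<in> carrier G \<rightarrow> carrier G" using g by auto
    show "inv g \<otimes> (g \<otimes> x) = x" if "x \<in> carrier G" for x using g that by (simp add: m_assoc[symmetric])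
    show "g \<otimes> (inv g \<otimes> y) = y" if "y \<in> carrier G" for y using g that by (simp add: m_assoc[symmetric])
  qed
  have Feq: "F (\<gamma> g *\<^sub>v v) = \<beta> g * F v" if g: "g \<in> carrier G" and v: "v \<in> carrier_vec n" for g v
  proof (rule eq_matI)
    show "dim_row (F (\<gamma> g *\<^sub>v v)) = dim_row (\<beta> g * F v)" using b.car[OF g] unfolding F_def by simp
    show "dim_col (F (\<gamma> g *\<^sub>v v)) = dim_col (\<beta> g * F v)" using b.car[OF g] unfolding F_def by simp
    fix i j assume "i < dim_row (\<beta> g * F v)" "j < dim_col (\<beta> g * F v)"
    then have ij: "i < n" "j < n" using b.car[OF g] unfolding F_def by auto
    define \<phi> where "\<phi> h = u (\<gamma> (inv h \<otimes> g) *\<^sub>v v) * \<beta> h $$ (i,j)" for h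
    have "F (\<gamma> g *\<^sub>v v) $$ (i,j) = (\<Sum>h\<in>carrier G. \<phi> h)"
      unfolding F_def \<phi>_def using ij g v
      by (auto intro!: sum.cong simp: c.mult assoc_mult_mat_vec[symmetric, OF c.car c.car v])
    also have "\<dots> = (\<Sum>h\<in>carrier G. \<phi> (g \<otimes> h))"
      using sum.reindex_bij_betw[OF bij[OF g], of \<phi>] by simp
    also have "\<dots> = (\<Sum>h\<in>carrier G. u (\<gamma> (inv h) *\<^sub>v v) * (\<beta> g * \<beta> h) $$ (i,j))"
    proof (rule sum.cong)
      fix h assume h: "h \<in> carrier G"
      have "inv (g \<otimes> h) \<otimes> g = inv h" using g h by (simp add: inv_mult_group m_assoc)
      then show "\<phi> (g \<otimes> h) = u (\<gamma> (inv h) *\<^sub>v v) * (\<beta> g * \<beta> h) $$ (i,j)"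
        unfolding \<phi>_def using g h by (simp add: b.mult)
    qed simp
    also have "\<dots> = (\<Sum>h\<in>carrier G. \<Sum>l<n. \<beta> g $$ (i,l) * (u (\<gamma> (inv h) *\<^sub>v v) * \<beta> h $$ (l,j)))"
    proof (rule sum.cong)
      fix h assume h: "h \<in> carrier G"
      have "(\<beta> g * \<beta> h) $$ (i,j) = (\<Sum>l<n. \<beta> g $$ (i,l) * \<beta> h $$ (l,j))"
        using b.car[OF g] b.car[OF h] ij
        by (simp add: scalar_prod_def atLeast0LessThan)
      then show "u (\<gamma> (inv h) *\<^sub>v v) * (\<beta> g * \<beta> h) $$ (i,j) =
          (\<Sum>l<n. \<beta> g $$ (i,l) * (u (\<gamma> (inv h) *\<^sub>v v) * \<beta> h $$ (l,j)))"
        by (simp add: sum_distrib_left algebra_simps)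
    qed simp
    also have "\<dots> = (\<Sum>l<n. \<beta> g $$ (i,l) * F v $$ (l,j))"
      unfolding F_def using ij by (subst sum.swap) (auto simp: sum_distrib_left intro!: sum.cong)
    also have "\<dots> = (\<beta> g * F v) $$ (i,j)"
      using b.car[OF g] ij unfolding F_def by (simp add: scalar_prod_def atLeast0LessThan)
    finally show "F (\<gamma> g *\<^sub>v v) $$ (i,j) = (\<beta> g * F v) $$ (i,j)" .
  qed
  have u1: "u x0 = 1" unfolding u_def d_def using dnz unfolding d_def by (auto intro: prod.neutral)
  have uval: "u (\<gamma> (inv h) *\<^sub>v x0) = (if h = \<one> then 1 else 0)" if h: "h \<in> carrier G" for h
  proof (cases "h = \<one>")
    case True
    then show ?thesis using u1 c.one x0(1) by simp
  next
    case False
    then have g0: "inv h \<in> C'" unfolding C'_def using h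
      by (metis DiffI inv_closed inv_eq_1_iff singletonD)
    have "(1 / d (inv h)) * ((\<gamma> (inv h) *\<^sub>v x0) $ r (inv h) - (\<gamma> (inv h) *\<^sub>v x0) $ r (inv h)) = 0" by simp
    then have "u (\<gamma> (inv h) *\<^sub>v x0) = 0" unfolding u_def using finC g0
      by (metis (no_types, lifting) prod_zero_iff)
    then show ?thesis using False by simp
  qed
  have F1: "F x0 = 1\<^sub>m n"
  proof (rule eq_matI)
    fix i j assume "i < dim_row (1\<^sub>m n :: 'k mat)" "j < dim_col (1\<^sub>m n :: 'k mat)"
    then have ij: "i < n" "j < n" by auto
    have "F x0 $$ (i,j) = (\<Sum>h\<in>carrier G. (if h = \<one> then \<beta> h $$ (i,j) else 0))"
      unfolding F_def using ij uval by (auto intro!: sum.cong)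
    also have "\<dots> = \<beta> \<one> $$ (i,j)" using fin by (simp add: sum.delta')
    finally show "F x0 $$ (i,j) = 1\<^sub>m n $$ (i,j)" using b.one by simp
  qed (auto simp: F_def)
  show ?thesis using x0(1) Fc Fp Feq F1 by blast
qed



lemma adj_inv1: assumes A: "(A::'k::field mat) \<in> carrier_mat n n" and d: "det A \<noteq> 0" and v: "v \<in> carrier_vec n"
  shows "A *\<^sub>v ((1 / det A) \<cdot>\<^sub>v (adj_mat A *\<^sub>v v)) = v"
proof -
  have "A *\<^sub>v ((1 / det A) \<cdot>\<^sub>v (adj_mat A *\<^sub>v v)) = (1 / det A) \<cdot>\<^sub>v (A *\<^sub>v (adj_mat A *\<^sub>v v))"
    using A v adj_mat(1)[OF A] by (simp add: mult_mat_vec)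
  also have "A *\<^sub>v (adj_mat A *\<^sub>v v) = (A * adj_mat A) *\<^sub>v v"
    using A v adj_mat(1)[OF A] by (simp add: assoc_mult_mat_vec)
  also have "\<dots> = det A \<cdot>\<^sub>v v" using adj_mat(2)[OF A] v
    by auto
  finally show ?thesis using d by (simp add: smult_smult_assoc)
qed

lemma adj_inv2: assumes A: "(A::'k::field mat) \<in> carrier_mat n n" and d: "det A \<noteq> 0" and v: "v \<in> carrier_vec n"
  shows "(1 / det A) \<cdot>\<^sub>v (adj_mat A *\<^sub>v (A *\<^sub>v v)) = v"
proof -
  have "adj_mat A *\<^sub>v (A *\<^sub>v v) = (adj_mat A * A) *\<^sub>v v"
    using A v adj_mat(1)[OF A] by (simp add: assoc_mult_mat_vec)
  also have "\<dots> = det A \<cdot>\<^sub>v v" using adj_mat(3)[OF A] v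
    by auto
  finally show ?thesis using d by (simp add: smult_smult_assoc)
qed



definition Xv :: "nat \<Rightarrow> (nat \<Rightarrow> 'k) \<Rightarrow> 'k vec" where "Xv n p = vec n p"
definition Yv :: "nat \<Rightarrow> (nat \<Rightarrow> 'k) \<Rightarrow> 'k vec" where "Yv n p = vec n (\<lambda>j. p (n + j))"
definition pt :: "nat \<Rightarrow> 'k vec \<Rightarrow> 'k vec \<Rightarrow> nat \<Rightarrow> 'k" where
  "pt n a b = (\<lambda>i. if i < n then a $ i else b $ (i - n))"
definition mk :: "nat \<Rightarrow> ((nat \<Rightarrow> 'k::field) \<Rightarrow> 'k vec) \<Rightarrow> ((nat \<Rightarrow> 'k) \<Rightarrow> 'k vec) \<Rightarrow> ((nat \<Rightarrow> 'k) \<Rightarrow> 'k) \<Rightarrow> 'k ratmap" where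
  "mk n a b d = ((\<lambda>i p. if i < n then a p $ i else if i < 2 * n then b p $ (i - n) else 0),
                 (\<lambda>i p. if i < n then 1 else if i < 2 * n then d p else 1))"
definition pvec :: "nat \<Rightarrow> nat \<Rightarrow> ((nat \<Rightarrow> 'k::field) \<Rightarrow> 'k vec) \<Rightarrow> bool" where
  "pvec m n w \<longleftrightarrow> (\<forall>p. w p \<in> carrier_vec n) \<and> (\<forall>j<n. (\<lambda>p. w p $ j) \<in> poly_funs m)"

lemma pvec_X: "pvec (2 * n) n (Xv n)"
  unfolding pvec_def Xv_def by (auto intro: pf_var)
lemma pvec_Y: "pvec (2 * n) n (Yv n)"
  unfolding pvec_def Yv_def by (auto intro: pf_var)

lemma vec_eta: "v \<in> carrier_vec n \<Longrightarrow> vec n (\<lambda>j. v $ j) = v"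
  by (intro eq_vecI) auto

lemma pvec_mv: assumes "pmat m n M" "pvec m n w" shows "pvec m n (\<lambda>p. M p *\<^sub>v w p)"
  unfolding pvec_def
proof (intro conjI allI impI)
  fix p show "M p *\<^sub>v w p \<in> carrier_vec n" using assms unfolding pmat_def pvec_def
    by (meson mult_mat_vec_carrier)
next
  fix i assume i: "i < n"
  have "(\<lambda>p. \<Sum>j<n. M p $$ (i,j) * w p $ j) \<in> poly_funs m"
    using assms i unfolding pmat_def pvec_def by (intro pf_sum pf_mult) auto
  moreover have "(M p *\<^sub>v w p) $ i = (\<Sum>j<n. M p $$ (i,j) * w p $ j)" for p
    using assms i mvec_entry[of "M p" n i "\<lambda>j. w p $ j"] vec_eta[of "w p" n] unfolding pmat_def pvec_def
    by metis
  ultimately show "(\<lambda>p. (M p *\<^sub>v w p) $ i) \<in> poly_funs m" by simp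
qed


lemma pmat_comp: assumes "\<And>v. F v \<in> carrier_mat n n"
  "\<And>i j. i < n \<Longrightarrow> j < n \<Longrightarrow> (\<lambda>p. F (vec n p) $$ (i,j)) \<in> poly_funs n" "pvec m n w"
  shows "pmat m n (\<lambda>p. F (w p))"
  unfolding pmat_def
proof (intro conjI allI impI)
  fix p show "F (w p) \<in> carrier_mat n n" by (rule assms(1))
next
  fix i j assume ij: "i < n" "j < n"
  have "(\<lambda>p. (\<lambda>q. F (vec n q) $$ (i,j)) (\<lambda>j. w p $ j)) \<in> poly_funs m"
    by (rule pf_subst[OF assms(2)[OF ij]]) (use assms(3) in \<open>auto simp: pvec_def\<close>)
  moreover have "F (vec n (\<lambda>j. w p $ j)) = F (w p)" for p
    using assms(3) vec_eta unfolding pvec_def by metis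
  ultimately show "(\<lambda>p. F (w p) $$ (i,j)) \<in> poly_funs m" by simp
qed

lemma mk_ratmap: assumes "pvec (2*n) n a" "pvec (2*n) n b" "d \<in> poly_funs (2*n)" "d p0 \<noteq> 0"
  shows "is_ratmap (2*n) (mk n a b d)"
  unfolding is_ratmap_def mk_def
proof (intro allI impI conjI)
  fix i assume i: "i < 2 * n"
  show "fst ((\<lambda>i p. if i < n then a p $ i else if i < 2 * n then b p $ (i - n) else 0),
           \<lambda>i p. if i < n then 1 else if i < 2 * n then d p else 1) i \<in> poly_funs (2 * n)"
    using assms i unfolding pvec_def by (cases "i < n") auto
  show "snd ((\<lambda>i p. if i < n then a p $ i else if i < 2 * n then b p $ (i - n) else 0),
           \<lambda>i p. if i < n then 1 else if i < 2 * n then d p else 1) i \<in> poly_funs (2 * n)"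
    using assms i by (cases "i < n") (auto intro: pf_const)
  show "\<exists>x. snd ((\<lambda>i p. if i < n then a p $ i else if i < 2 * n then b p $ (i - n) else 0),
           \<lambda>i p. if i < n then 1 else if i < 2 * n then d p else 1) i x \<noteq> 0"
    using assms i by auto
qed

lemma mk_def': "d p \<noteq> 0 \<Longrightarrow> rm_defined (2*n) (mk n a b d) p"
  unfolding rm_defined_def mk_def by auto

lemma mk_X: "a p \<in> carrier_vec n \<Longrightarrow> Xv n (rm_eval (mk n a b d) p) = a p"
  unfolding Xv_def rm_eval_def mk_def by (intro eq_vecI) auto

lemma mk_Y: "b p \<in> carrier_vec n \<Longrightarrow> Yv n (rm_eval (mk n a b d) p) = (1 / d p) \<cdot>\<^sub>v b p"
  unfolding Yv_def rm_eval_def mk_def by (intro eq_vecI) auto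

lemma pt_eq: assumes "Xv n q = Xv n r" "Yv n q = Yv n r" shows "\<forall>i < 2*n. q i = r i"
proof (intro allI impI)
  fix i assume i: "i < 2 * n"
  show "q i = r i"
  proof (cases "i < n")
    case True
    then show ?thesis using arg_cong[OF assms(1), of "\<lambda>v. v $ i"] unfolding Xv_def by simp
  next
    case False
    then have "i - n < n" "n + (i - n) = i" using i by auto
    then show ?thesis using arg_cong[OF assms(2), of "\<lambda>v. v $ (i - n)"] unfolding Yv_def by simp
  qed
qed

lemma la_X: assumes A: "A \<in> carrier_mat n n" shows "Xv n (lin_act2 n A p) = A *\<^sub>v Xv n p"
proof (rule eq_vecI)
  fix i assume "i < dim_vec (A *\<^sub>v Xv n p)"
  then have i: "i < n" using A by simp
  have "(A *\<^sub>v vec n p) $ i = (\<Sum>j<n. A $$ (i,j) * p j)" by (rule mvec_entry[OF A i])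
  then show "Xv n (lin_act2 n A p) $ i = (A *\<^sub>v Xv n p) $ i"
    using i unfolding Xv_def lin_act2_def by simp
qed (use A in \<open>simp add: Xv_def\<close>)
lemma la_Y: "Yv n (lin_act2 n A p) = Yv n p"
  unfolding Yv_def lin_act2_def by (intro eq_vecI) auto
lemma pt_X: "a \<in> carrier_vec n \<Longrightarrow> Xv n (pt n a b) = a"
  unfolding Xv_def pt_def by (intro eq_vecI) auto
lemma pt_Y: "b \<in> carrier_vec n \<Longrightarrow> Yv n (pt n a b) = b"
  unfolding Yv_def pt_def by (intro eq_vecI) auto
lemma X_car: "Xv n p \<in> carrier_vec n" unfolding Xv_def by simp
lemma Y_car: "Yv n p \<in> carrier_vec n" unfolding Yv_def by simp



theorem proposition3p2:
  fixes G :: "('g, 'b) monoid_scheme"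
    and \<alpha>1 \<alpha>2 :: "'g \<Rightarrow> 'k::field_char_0 mat"
    and n :: nat
  assumes "alg_closed_field TYPE('k)"
    and "group G" and "finite (carrier G)"
    and "\<alpha>1 \<in> hom G (GL n)" and "inj_on \<alpha>1 (carrier G)"
    and "\<alpha>2 \<in> hom G (GL n)" and "inj_on \<alpha>2 (carrier G)"
  shows "\<exists>\<phi> \<psi>. birational_pair (2 * n) \<phi> \<psi> \<and>
           (\<forall>g \<in> carrier G.
              contains_nonempty_open (2 * n)
                {x. rm_defined (2 * n) \<psi> x \<and>
                    rm_defined (2 * n) \<phi> (lin_act2 n (\<alpha>2 g) (rm_eval \<psi> x)) \<and>
                    (\<forall>i < 2 * n. rm_eval \<phi> (lin_act2 n (\<alpha>2 g) (rm_eval \<psi> x)) i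
                                 = lin_act2 n (\<alpha>1 g) x i)})"
proof -
  note grp = assms(2) and fin = assms(3)
  interpret a1: GLhom G n \<alpha>1 using grp assms(4) by (intro GLhom.intro)
  interpret a2: GLhom G n \<alpha>2 using grp assms(6) by (intro GLhom.intro)
  obtain F x0 where x0: "x0 \<in> carrier_vec n" and Fc: "\<And>v. F v \<in> carrier_mat n n"
    and Fp: "\<And>i j. i < n \<Longrightarrow> j < n \<Longrightarrow> (\<lambda>p. F (vec n p) $$ (i,j)) \<in> poly_funs n"
    and Feq: "\<And>g v. g \<in> carrier G \<Longrightarrow> v \<in> carrier_vec n \<Longrightarrow> F (\<alpha>2 g *\<^sub>v v) = \<alpha>1 g * F v"
    and F1: "F x0 = 1\<^sub>m n"
    using exists_F[OF grp fin assms(4) assms(6) assms(7)] by metis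
  obtain E y0 where y0: "y0 \<in> carrier_vec n" and Ec: "\<And>v. E v \<in> carrier_mat n n"
    and Ep: "\<And>i j. i < n \<Longrightarrow> j < n \<Longrightarrow> (\<lambda>p. E (vec n p) $$ (i,j)) \<in> poly_funs n"
    and Eeq: "\<And>g v. g \<in> carrier G \<Longrightarrow> v \<in> carrier_vec n \<Longrightarrow> E (\<alpha>1 g *\<^sub>v v) = \<alpha>2 g * E v"
    and E1: "E y0 = 1\<^sub>m n"
    using exists_F[OF grp fin assms(6) assms(4) assms(5)] by metis
  define X :: "(nat \<Rightarrow> 'k) \<Rightarrow> 'k vec" where "X = Xv n"
  define Y :: "(nat \<Rightarrow> 'k) \<Rightarrow> 'k vec" where "Y = Yv n"
  define z where "z p = F (X p) *\<^sub>v Y p" for p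
  define xs where "xs p = E (X p) *\<^sub>v Y p" for p
  define \<phi> where "\<phi> = mk n z (\<lambda>p. adj_mat (E (z p)) *\<^sub>v X p) (\<lambda>p. det (E (z p)))"
  define \<psi> where "\<psi> = mk n xs (\<lambda>p. adj_mat (F (xs p)) *\<^sub>v X p) (\<lambda>p. det (F (xs p)))"
  have pX: "pvec (2*n) n X" and pY: "pvec (2*n) n Y" unfolding X_def Y_def by (rule pvec_X, rule pvec_Y)
  have Xc: "X p \<in> carrier_vec n" and Yc: "Y p \<in> carrier_vec n" for p
    unfolding X_def Y_def by (rule X_car, rule Y_car)
  have pmFX: "pmat (2*n) n (\<lambda>p. F (X p))" by (rule pmat_comp[OF Fc Fp pX])
  have pmEX: "pmat (2*n) n (\<lambda>p. E (X p))" by (rule pmat_comp[OF Ec Ep pX])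
  have pz: "pvec (2*n) n z" unfolding z_def by (rule pvec_mv[OF pmFX pY])
  have pxs: "pvec (2*n) n xs" unfolding xs_def by (rule pvec_mv[OF pmEX pY])
  have pmEz: "pmat (2*n) n (\<lambda>p. E (z p))" by (rule pmat_comp[OF Ec Ep pz])
  have pmFxs: "pmat (2*n) n (\<lambda>p. F (xs p))" by (rule pmat_comp[OF Fc Fp pxs])
  have zc: "z p \<in> carrier_vec n" and xsc: "xs p \<in> carrier_vec n" for p
    using pz pxs unfolding pvec_def by auto
  define p0 where "p0 = pt n x0 y0"
  define p1 where "p1 = pt n y0 x0"
  have X0: "X p0 = x0" "Y p0 = y0" "X p1 = y0" "Y p1 = x0"
    unfolding X_def Y_def p0_def p1_def using x0 y0 by (auto simp: pt_X pt_Y)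
  have z0: "z p0 = y0" unfolding z_def X0 F1 using y0 by simp
  have xs1: "xs p1 = x0" unfolding xs_def X0 E1 using x0 by simp
  have dE0: "det (E (z p0)) = 1" unfolding z0 E1 by simp
  have dF1: "det (F (xs p1)) = 1" unfolding xs1 F1 by simp
  have rmphi: "is_ratmap (2*n) \<phi>" unfolding \<phi>_def
    by (rule mk_ratmap[OF pz pvec_mv[OF pmat_adj[OF pmEz] pX] pf_det[OF pmEz], of p0]) (simp add: dE0)
  have rmpsi: "is_ratmap (2*n) \<psi>" unfolding \<psi>_def
    by (rule mk_ratmap[OF pxs pvec_mv[OF pmat_adj[OF pmFxs] pX] pf_det[OF pmFxs], of p1]) (simp add: dF1)
  have adjc: "adj_mat (E v) *\<^sub>v w \<in> carrier_vec n" "adj_mat (F v) *\<^sub>v w \<in> carrier_vec n"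
    if "w \<in> carrier_vec n" for v w
    using that adj_mat(1)[OF Ec] adj_mat(1)[OF Fc] by (auto intro: mult_mat_vec_carrier)
  have phiX: "X (rm_eval \<phi> p) = z p" for p unfolding X_def \<phi>_def by (rule mk_X[OF zc])
  have phiY: "Y (rm_eval \<phi> p) = (1 / det (E (z p))) \<cdot>\<^sub>v (adj_mat (E (z p)) *\<^sub>v X p)" for p
    unfolding Y_def \<phi>_def by (rule mk_Y[OF adjc(1)[OF Xc]])
  have psiX: "X (rm_eval \<psi> p) = xs p" for p unfolding X_def \<psi>_def by (rule mk_X[OF xsc])
  have psiY: "Y (rm_eval \<psi> p) = (1 / det (F (xs p))) \<cdot>\<^sub>v (adj_mat (F (xs p)) *\<^sub>v X p)" for p
    unfolding Y_def \<psi>_def by (rule mk_Y[OF adjc(2)[OF Xc]])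
  have phidef: "det (E (z p)) \<noteq> 0 \<Longrightarrow> rm_defined (2*n) \<phi> p" for p unfolding \<phi>_def by (rule mk_def')
  have psidef: "det (F (xs p)) \<noteq> 0 \<Longrightarrow> rm_defined (2*n) \<psi> p" for p unfolding \<psi>_def by (rule mk_def')
  have eqXY: "X q = X r \<Longrightarrow> Y q = Y r \<Longrightarrow> \<forall>i<2*n. q i = r i" for q r
    unfolding X_def Y_def by (rule pt_eq)
  define h1 where "h1 p = det (F (X p)) * det (E (z p))" for p
  define h2 where "h2 p = det (E (X p)) * det (F (xs p))" for p
  have h1p: "h1 \<in> poly_funs (2*n)" unfolding h1_def using pf_mult[OF pf_det[OF pmFX] pf_det[OF pmEz]] by simp
  have h2p: "h2 \<in> poly_funs (2*n)" unfolding h2_def using pf_mult[OF pf_det[OF pmEX] pf_det[OF pmFxs]] by simp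
  have h10: "h1 p0 \<noteq> 0" unfolding h1_def dE0 X0 F1 by simp
  have h21: "h2 p1 \<noteq> 0" unfolding h2_def dF1 X0 E1 by simp
  have S1: "rm_defined (2*n) \<phi> p \<and> rm_defined (2*n) \<psi> (rm_eval \<phi> p) \<and>
            (\<forall>i<2*n. rm_eval \<psi> (rm_eval \<phi> p) i = p i)" if h: "h1 p \<noteq> 0" for p
  proof -
    have dF: "det (F (X p)) \<noteq> 0" and dE: "det (E (z p)) \<noteq> 0" using h unfolding h1_def by auto
    define q where "q = rm_eval \<phi> p"
    have xq: "xs q = X p" unfolding xs_def q_def phiX phiY by (rule adj_inv1[OF Ec dE Xc])
    have 1: "X (rm_eval \<psi> q) = X p" unfolding psiX xq ..
    have 2: "Y (rm_eval \<psi> q) = Y p" unfolding psiY xq unfolding q_def phiX z_def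
      by (rule adj_inv2[OF Fc dF Yc])
    show ?thesis using phidef[OF dE] psidef[of q] dF eqXY[OF 1 2] xq unfolding q_def by auto
  qed
  have Q: "rm_defined (2*n) \<psi> p \<and> X (rm_eval \<psi> p) = xs p \<and> z (rm_eval \<psi> p) = X p" if h: "h2 p \<noteq> 0" for p
  proof -
    have dF: "det (F (xs p)) \<noteq> 0" using h unfolding h2_def by auto
    have "z (rm_eval \<psi> p) = X p" unfolding z_def psiX psiY by (rule adj_inv1[OF Fc dF Xc])
    then show ?thesis using psidef[OF dF] psiX by auto
  qed
  have S2: "rm_defined (2*n) \<psi> p \<and> rm_defined (2*n) \<phi> (rm_eval \<psi> p) \<and>
            (\<forall>i<2*n. rm_eval \<phi> (rm_eval \<psi> p) i = p i)" if h: "h2 p \<noteq> 0" for p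
  proof -
    have dE: "det (E (X p)) \<noteq> 0" using h unfolding h2_def by auto
    define q where "q = rm_eval \<psi> p"
    have zq: "z q = X p" and Xq: "X q = xs p" using Q[OF h] unfolding q_def by auto
    have 1: "X (rm_eval \<phi> q) = X p" unfolding phiX zq ..
    have 2: "Y (rm_eval \<phi> q) = Y p" unfolding phiY zq Xq xs_def
      by (rule adj_inv2[OF Ec dE Yc])
    show ?thesis using Q[OF h] phidef[of q] dE eqXY[OF 1 2] zq unfolding q_def by auto
  qed
  have S3: "rm_defined (2 * n) \<psi> p \<and>
            rm_defined (2 * n) \<phi> (lin_act2 n (\<alpha>2 g) (rm_eval \<psi> p)) \<and>
            (\<forall>i < 2 * n. rm_eval \<phi> (lin_act2 n (\<alpha>2 g) (rm_eval \<psi> p)) i = lin_act2 n (\<alpha>1 g) p i)"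
    if h: "h2 p \<noteq> 0" and g: "g \<in> carrier G" for p g
  proof -
    have dE: "det (E (X p)) \<noteq> 0" using h unfolding h2_def by auto
    define q where "q = rm_eval \<psi> p"
    define q' where "q' = lin_act2 n (\<alpha>2 g) q"
    have zq: "z q = X p" and Xq: "X q = xs p" using Q[OF h] unfolding q_def by auto
    have Xq': "X q' = \<alpha>2 g *\<^sub>v xs p" unfolding q'_def X_def la_X[OF a2.car[OF g]]
      using Xq unfolding X_def by simp
    have Yq': "Y q' = Y q" unfolding q'_def Y_def la_Y ..
    define M where "M = \<alpha>2 g * E (X p)"
    have Mc: "M \<in> carrier_mat n n" unfolding M_def using a2.car[OF g] Ec by (meson mult_carrier_mat)
    have zq': "z q' = \<alpha>1 g *\<^sub>v X p"
    proof -
      have "z q' = (\<alpha>1 g * F (X q)) *\<^sub>v Y q" unfolding z_def Xq' Yq' Xq Feq[OF g xsc] ..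
      also have "\<dots> = \<alpha>1 g *\<^sub>v (F (X q) *\<^sub>v Y q)"
        using a1.car[OF g] Fc Yc by (meson assoc_mult_mat_vec)
      finally show ?thesis using zq unfolding z_def by simp
    qed
    have EM: "E (z q') = M" unfolding zq' M_def by (rule Eeq[OF g Xc])
    have dM: "det M \<noteq> 0" unfolding M_def using det_mult[OF a2.car[OF g] Ec] a2.detnz[OF g] dE by simp
    have Xq'M: "X q' = M *\<^sub>v Y p" unfolding Xq' xs_def M_def
      using assoc_mult_mat_vec[OF a2.car[OF g] Ec Yc] by simp
    have 1: "X (rm_eval \<phi> q') = X (lin_act2 n (\<alpha>1 g) p)"
      using phiX[of q'] zq' la_X[OF a1.car[OF g], of p] unfolding X_def by simp
    have 2: "Y (rm_eval \<phi> q') = Y (lin_act2 n (\<alpha>1 g) p)"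
    proof -
      have "Y (rm_eval \<phi> q') = Y p" unfolding phiY EM Xq'M by (rule adj_inv2[OF Mc dM Yc])
      then show ?thesis unfolding Y_def la_Y .
    qed
    show ?thesis using Q[OF h] phidef[of q'] EM dM eqXY[OF 1 2] unfolding q_def q'_def by auto
  qed
  have "birational_pair (2 * n) \<phi> \<psi>"
    unfolding birational_pair_def contains_nonempty_open_def
    using rmphi rmpsi h1p h2p h10 h21 S1 S2 by blast
  moreover have "\<forall>g \<in> carrier G.
              contains_nonempty_open (2 * n)
                {x. rm_defined (2 * n) \<psi> x \<and>
                    rm_defined (2 * n) \<phi> (lin_act2 n (\<alpha>2 g) (rm_eval \<psi> x)) \<and>
                    (\<forall>i < 2 * n. rm_eval \<phi> (lin_act2 n (\<alpha>2 g) (rm_eval \<psi> x)) i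
                                 = lin_act2 n (\<alpha>1 g) x i)}"
    unfolding contains_nonempty_open_def using h2p h21 S3 by blast
  ultimately show ?thesis by blast
qed

end
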